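(* Let $(M,g)$ be a complete Riemannian manifold and let $V\in L^\infty_{\rm loc}(M)$ with $V\ge1$ a.e., $\operatorname{ess\,lim}_{d(p,p_0)\to\infty}V(p)=\infty$, satisfying the doubling condition. Then $$\lim_{\delta\to0}\frac{\int_M e^{-tV(x)}\,dx}{\int_M e^{-t(1-\delta)V(x)}\,dx}=1$$ uniformly in $t\in(0,1]$.
   Context: $d$ is the Riemannian distance, $p_0\in M$ fixed, $dx$ and $|\cdot|$ the Riemannian measure. $\operatorname{ess\,lim}V=\infty$ means: for every $L>0$ there is $R>0$ with $V(p)\ge L$ for a.e. $p$ with $d(p,p_0)\ge R$. Doubling condition: with $\sigma(\lambda)=|\{x:V(x)\le\lambda\}|$, there are $C_V,\lambda_0>0$ with $\sigma(2\lambda)\le C_V\sigma(\lambda)$ for all $\lambda\ge\lambda_0$. *)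

theory Defs
  imports "HOL-Analysis.Analysis"
begin

text \<open>Abstract stand-in for a complete Riemannian manifold with its Riemannian
measure: a proper (Heine-Borel) metric space with a Borel measure that is finite
on compact sets and positive on nonempty open sets.\<close>

definition riemannian_like_measure :: "'a::{metric_space,heine_borel} measure \<Rightarrow> bool" where
  "riemannian_like_measure M \<longleftrightarrow>
     sets M = sets borel \<and>
     (\<forall>K. compact K \<longrightarrow> emeasure M K < \<infinity>) \<and>
     (\<forall>U. open U \<and> U \<noteq> {} \<longrightarrow> emeasure M U > 0)"

definition Linf_loc :: "'a::metric_space measure \<Rightarrow> ('a \<Rightarrow> real) \<Rightarrow> bool" where
  "Linf_loc M V \<longleftrightarrow> V \<in> borel_measurable M \<and>
     (\<forall>K. compact K \<longrightarrow> (\<exists>C. AE x in M. x \<in> K \<longrightarrow> \<bar>V x\<bar> \<le> C))"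

definition ess_lim_infty :: "'a::metric_space measure \<Rightarrow> 'a \<Rightarrow> ('a \<Rightarrow> real) \<Rightarrow> bool" where
  "ess_lim_infty M p0 V \<longleftrightarrow>
     (\<forall>L>0. \<exists>R>0. AE p in M. dist p p0 \<ge> R \<longrightarrow> V p \<ge> L)"

definition sigma_V :: "'a measure \<Rightarrow> ('a \<Rightarrow> real) \<Rightarrow> real \<Rightarrow> ennreal" where
  "sigma_V M V lam = emeasure M {x \<in> space M. V x \<le> lam}"

definition doubling_cond :: "'a measure \<Rightarrow> ('a \<Rightarrow> real) \<Rightarrow> bool" where
  "doubling_cond M V \<longleftrightarrow>
     (\<exists>C\<^sub>V>0. \<exists>lam0>0. \<forall>lam\<ge>lam0.
        sigma_V M V (2 * lam) \<le> ennreal C\<^sub>V * sigma_V M V lam)"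

end

theory Submission
  imports Defs
begin

lemma exp_diff_bound:
  fixes y d :: real
  assumes y: "0 \<le> y" and d: "0 < d" "d < 1/2"
  shows "exp (-(1-d)*y) - exp (-y) \<le> 4*d*exp (-y/4)"
proof -
  have e1: "1 - exp (-(d*y)) \<le> d*y" using exp_ge_add_one_self[of "-(d*y)"] by simp
  have split: "exp (-y) = exp (-(1-d)*y) * exp (-(d*y))"
    by (simp add: exp_add[symmetric] algebra_simps)
  have "exp (-(1-d)*y) - exp (-y) = exp (-(1-d)*y) * (1 - exp (-(d*y)))"
    by (simp add: split algebra_simps)
  also have "\<dots> \<le> exp (-(1-d)*y) * (d*y)"
    by (rule mult_left_mono[OF e1]) simp
  also have "\<dots> \<le> exp (-y/2) * (d*y)"
  proof (rule mult_right_mono)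
    have "(1/2) * y \<le> (1-d) * y" using y d by (intro mult_right_mono) auto
    hence "-(1-d)*y \<le> -y/2" by linarith
    thus "exp (-(1-d)*y) \<le> exp (-y/2)" by simp
  qed (use y d in simp)
  also have "y \<le> 4 * exp (y/4)" using exp_ge_add_one_self[of "y/4"] by linarith
  hence "exp (-y/2) * (d*y) \<le> exp (-y/2) * (d*(4*exp (y/4)))"
    using d by (intro mult_left_mono) auto
  also have "exp (-y/2) * (d*(4*exp (y/4))) = 4*d*(exp (-y/2) * exp (y/4))" by simp
  also have "exp (-y/2) * exp (y/4) = exp (-y/4)" by (simp add: exp_add[symmetric])
  finally show ?thesis by simp
qed

theorem corollary3p1:
  fixes M :: "'a::{metric_space,heine_borel} measure"
    and V :: "'a \<Rightarrow> real" and p0 :: 'a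
  assumes "riemannian_like_measure M"
    and "Linf_loc M V"
    and "AE x in M. V x \<ge> 1"
    and "ess_lim_infty M p0 V"
    and "doubling_cond M V"
  shows "\<forall>\<epsilon>>0. \<exists>\<delta>\<^sub>0>0. \<forall>\<delta>. 0 < \<delta> \<and> \<delta> < \<delta>\<^sub>0 \<longrightarrow>
           (\<forall>t\<in>{0<..1}.
              \<bar>(\<integral>x. exp (- t * V x) \<partial>M) / (\<integral>x. exp (- t * (1 - \<delta>) * V x) \<partial>M) - 1\<bar> < \<epsilon>)"
proof -
  from assms(1) have sets: "sets M = sets borel"
    and fin: "\<And>K. compact K \<Longrightarrow> emeasure M K < \<infinity>"
    and pos: "\<And>U. open U \<Longrightarrow> U \<noteq> {} \<Longrightarrow> emeasure M U > 0"
    unfolding riemannian_like_measure_def by auto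
  have space: "space M = UNIV" using sets_eq_imp_space_eq[OF sets] by simp
  have Vm[measurable]: "V \<in> borel_measurable M" using assms(2) unfolding Linf_loc_def by auto
  have AEV: "AE x in M. V x \<ge> 1" by fact
  obtain C lam0 where C: "C > 0" "lam0 > 0"
    and dbl: "\<And>lam. lam \<ge> lam0 \<Longrightarrow> sigma_V M V (2*lam) \<le> ennreal C * sigma_V M V lam"
    using assms(5) unfolding doubling_cond_def by blast
  define Lam where "Lam = max lam0 (max 1 (8*ln(2*C)))"
  have Lam: "Lam \<ge> lam0" "Lam > 0" "Lam \<ge> 8*ln(2*C)" unfolding Lam_def by auto
  define q where "q = exp (-Lam/8)"
  have q0: "q > 0" unfolding q_def by simp
  have "q \<le> exp (-ln (2*C))" unfolding q_def using Lam by simp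
  also have "\<dots> = 1/(2*C)" using C by (simp add: exp_minus inverse_eq_divide)
  finally have Cq: "C*q \<le> 1/2" using C by (simp add: field_simps)
  have sig_pow: "sigma_V M V (2^k*L) \<le> ennreal (C^k) * sigma_V M V L" if L: "L \<ge> lam0" for L k
  proof (induction k)
    case 0 then show ?case by simp
  next
    case (Suc k)
    have "2^k*L \<ge> lam0" using L C
      by (smt (verit) mult_le_cancel_right1 one_le_power)
    hence "sigma_V M V (2*(2^k*L)) \<le> ennreal C * sigma_V M V (2^k*L)" by (rule dbl)
    also have "\<dots> \<le> ennreal C * (ennreal (C^k) * sigma_V M V L)"
      using Suc by (intro mult_left_mono) auto
    also have "\<dots> = ennreal (C^Suc k) * sigma_V M V L"
      using C by (simp add: ennreal_mult mult.assoc)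
    finally show ?case by (simp add: mult.assoc)
  qed
  have sig_fin: "sigma_V M V L < \<infinity>" if "L > 0" for L
  proof -
    obtain R where R: "R > 0" "AE p in M. dist p p0 \<ge> R \<longrightarrow> V p \<ge> L + 1"
      using assms(4) \<open>L > 0\<close> unfolding ess_lim_infty_def
      by (metis add_pos_pos zero_less_one)
    have cb: "cball p0 R \<in> sets M" using sets by simp
    have "sigma_V M V L \<le> emeasure M (cball p0 R)"
      unfolding sigma_V_def
    proof (rule emeasure_mono_AE[OF _ cb])
      show "AE x in M. x \<in> {x \<in> space M. V x \<le> L} \<longrightarrow> x \<in> cball p0 R"
        using R(2) by eventually_elim (auto simp: dist_commute)
    qed
    also have "\<dots> < \<infinity>" by (rule fin) simp
    finally show ?thesis .
  qed
  have key: "(\<integral>\<^sup>+x. ennreal (exp (-(t/4) * V x)) \<partial>M) \<le> 2 * sigma_V M V (Lam/t)"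
    if t: "0 < t" "t \<le> 1" for t
  proof -
    define L where "L = Lam/t"
    have L: "L \<ge> Lam" unfolding L_def using t Lam by (simp add: field_simps)
    have tL: "t*L = Lam" unfolding L_def using t by simp
    have Lpos: "L > 0" using L Lam by linarith
    let ?S = "\<lambda>k. {x \<in> space M. V x \<le> 2^k*L}"
    have pw: "AE x in M. ennreal (exp (-(t/4) * V x))
               \<le> (\<Sum>k. ennreal (q^k) * indicator (?S k) x)"
      using AEV
    proof eventually_elim
      fix x assume Vx: "1 \<le> V x"
      obtain n where n: "V x / L < 2^n" using real_arch_pow[of 2 "V x / L"] by auto
      have ex: "V x \<le> 2^n*L" using n Lpos by (simp add: field_simps)
      define k0 where "k0 = (LEAST k. V x \<le> 2^k*L)"
      have k0: "V x \<le> 2^k0*L" unfolding k0_def by (rule LeastI[of _ n]) (rule ex)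
      have bound: "exp (-(t/4) * V x) \<le> q^k0"
      proof (cases k0)
        case 0
        have "0 \<le> t * V x" using t Vx by simp
        then show ?thesis using 0 by simp
      next
        case (Suc j)
        have "\<not> V x \<le> 2^j*L" unfolding k0_def
          using not_less_Least[of j "\<lambda>k. V x \<le> 2^k*L"] Suc k0_def by auto
        hence "V x > 2^j*L" by simp
        hence "t * (2^j*L) < t * V x" using t(1) by (rule mult_strict_left_mono)
        moreover have "t * (2^j*L) = 2^j * Lam" using tL by (metis mult.left_commute)
        ultimately have tv: "t * V x > 2^j * Lam" by simp
        moreover have "real (Suc j) \<le> 2 * 2^j"
        proof -
          have "Suc j < 2^Suc j" by (rule less_exp)
          hence "real (Suc j) < real (2^Suc j)" by linarith
          thus ?thesis by simp
        qed
        hence "real (Suc j) * Lam \<le> (2 * 2^j) * Lam" using Lam by (intro mult_right_mono) auto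
        hence "real k0 * Lam \<le> 2 * (2^j * Lam)" using Suc by (simp only: mult.assoc)
        hence "real k0 * Lam / 8 \<le> (t/4) * V x" using tv by linarith
        hence le: "exp (-(t/4) * V x) \<le> exp (real k0 * (-Lam/8))" by simp
        have eq: "exp (real k0 * (-Lam/8)) = q^k0" unfolding q_def by (rule exp_of_nat_mult)
        show ?thesis using le eq by linarith
      qed
      have "ennreal (exp (-(t/4) * V x)) \<le> ennreal (q^k0) * indicator (?S k0) x"
        using bound k0 space by (auto simp: indicator_def intro: ennreal_leI)
      also have "\<dots> \<le> (\<Sum>k. ennreal (q^k) * indicator (?S k) x)"
      proof (rule ccontr)
        assume "\<not> ennreal (q^k0) * indicator (?S k0) x \<le> (\<Sum>k. ennreal (q^k) * indicator (?S k) x)"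
        hence "(\<Sum>k. ennreal (q^k) * indicator (?S k) x) < ennreal (q^k0) * indicator (?S k0) x"
          by (simp add: not_le)
        hence "ennreal (q^k0) * indicator (?S k0) x < ennreal (q^k0) * indicator (?S k0) x"
          by (rule ennreal_suminf_lessD)
        thus False by simp
      qed
      finally show "ennreal (exp (-(t/4) * V x)) \<le> (\<Sum>k. ennreal (q^k) * indicator (?S k) x)" .
    qed
    have "(\<integral>\<^sup>+x. ennreal (exp (-(t/4) * V x)) \<partial>M)
          \<le> (\<integral>\<^sup>+x. (\<Sum>k. ennreal (q^k) * indicator (?S k) x) \<partial>M)"
      by (rule nn_integral_mono_AE[OF pw])
    also have "\<dots> = (\<Sum>k. \<integral>\<^sup>+x. ennreal (q^k) * indicator (?S k) x \<partial>M)"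
      by (rule nn_integral_suminf) measurable
    also have "\<dots> = (\<Sum>k. ennreal (q^k) * sigma_V M V (2^k*L))"
      by (subst nn_integral_cmult_indicator) (auto simp: sigma_V_def)
    also have "\<dots> \<le> (\<Sum>k. ennreal ((1/2)^k) * sigma_V M V L)"
    proof (rule suminf_le)
      fix k
      have "ennreal (q^k) * sigma_V M V (2^k*L) \<le> ennreal (q^k) * (ennreal (C^k) * sigma_V M V L)"
        using sig_pow[of L k] L Lam by (intro mult_left_mono) auto
      also have "\<dots> = ennreal ((C*q)^k) * sigma_V M V L"
      proof -
        have "ennreal ((C*q)^k) = ennreal (q^k) * ennreal (C^k)"
          using C q0 by (subst ennreal_mult[symmetric]) (auto simp: power_mult_distrib)
        thus ?thesis by (simp add: mult.assoc)
      qed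
      also have "\<dots> \<le> ennreal ((1/2)^k) * sigma_V M V L"
        using Cq C q0 by (intro mult_right_mono ennreal_leI power_mono) auto
      finally show "ennreal (q^k) * sigma_V M V (2^k*L) \<le> ennreal ((1/2)^k) * sigma_V M V L" .
    qed auto
    also have "\<dots> = (\<Sum>k. ennreal ((1/2)^k)) * sigma_V M V L"
      by (rule ennreal_suminf_multc)
    also have "(\<Sum>k. ennreal ((1/2::real)^k)) = ennreal 2"
      by (rule suminf_ennreal_eq) (auto intro: geometric_sums[of "1/2::real", simplified])
    finally show ?thesis unfolding L_def by simp
  qed
  have low: "ennreal (exp (-Lam)) * sigma_V M V (Lam/t) \<le> (\<integral>\<^sup>+x. ennreal (exp (-t * V x)) \<partial>M)"
    if t: "0 < t" "t \<le> 1" for t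
  proof -
    have "ennreal (exp (-Lam)) * sigma_V M V (Lam/t)
        = (\<integral>\<^sup>+x. ennreal (exp (-Lam)) * indicator {x \<in> space M. V x \<le> Lam/t} x \<partial>M)"
      by (subst nn_integral_cmult_indicator) (auto simp: sigma_V_def)
    also have "\<dots> \<le> (\<integral>\<^sup>+x. ennreal (exp (-t * V x)) \<partial>M)"
    proof (rule nn_integral_mono)
      fix x
      show "ennreal (exp (-Lam)) * indicator {x \<in> space M. V x \<le> Lam/t} x \<le> ennreal (exp (-t * V x))"
      proof (cases "V x \<le> Lam/t")
        case True
        hence "t * V x \<le> Lam" using t by (simp add: field_simps)
        thus ?thesis using True space by (simp add: indicator_def)
      qed (simp add: indicator_def)
    qed
    finally show ?thesis .
  qed
  have intg: "integrable M (\<lambda>x. exp (- s * V x))" if t: "0 < t" "t \<le> 1" "s \<ge> t/4" for t s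
  proof (rule integrableI_nonneg)
    show "(\<lambda>x. exp (- s * V x)) \<in> borel_measurable M" by measurable
    show "AE x in M. 0 \<le> exp (- s * V x)" by simp
    have "(\<integral>\<^sup>+x. ennreal (exp (- s * V x)) \<partial>M) \<le> (\<integral>\<^sup>+x. ennreal (exp (-(t/4) * V x)) \<partial>M)"
      using AEV
    proof (intro nn_integral_mono_AE, eventually_elim)
      fix x assume "1 \<le> V x"
      hence "(t/4) * V x \<le> s * V x" using t by (intro mult_right_mono) auto
      thus "ennreal (exp (- s * V x)) \<le> ennreal (exp (-(t/4) * V x))" by (intro ennreal_leI) simp
    qed
    also have "\<dots> \<le> 2 * sigma_V M V (Lam/t)" by (rule key[OF t(1,2)])
    also have "\<dots> < \<infinity>" using sig_fin[of "Lam/t"] t Lam by (simp add: ennreal_mult_less_top)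
    finally show "(\<integral>\<^sup>+x. ennreal (exp (- s * V x)) \<partial>M) < \<infinity>" .
  qed
  define A where "A = 2 * exp Lam"
  have A: "A > 0" unfolding A_def by simp
  have Zrel: "(\<integral>x. exp (-(t/4) * V x) \<partial>M) \<le> A * (\<integral>x. exp (-t * V x) \<partial>M)"
    and Zpos: "(\<integral>x. exp (-t * V x) \<partial>M) > 0"
    if t: "0 < t" "t \<le> 1" for t
  proof -
    have i1: "integrable M (\<lambda>x. exp (-(t/4) * V x))" using intg[OF t, of "t/4"] by simp
    have i2: "integrable M (\<lambda>x. exp (-t * V x))" using intg[OF t, of t] t by simp
    have e1: "(\<integral>\<^sup>+x. ennreal (exp (-(t/4) * V x)) \<partial>M) = ennreal (\<integral>x. exp (-(t/4) * V x) \<partial>M)"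
      by (rule nn_integral_eq_integral[OF i1]) simp
    have e2: "(\<integral>\<^sup>+x. ennreal (exp (-t * V x)) \<partial>M) = ennreal (\<integral>x. exp (-t * V x) \<partial>M)"
      by (rule nn_integral_eq_integral[OF i2]) simp
    obtain s0 where s0: "sigma_V M V (Lam/t) = ennreal s0" "s0 \<ge> 0"
      using sig_fin[of "Lam/t"] t Lam by (cases "sigma_V M V (Lam/t)") auto
    have z1: "0 \<le> (\<integral>x. exp (-(t/4) * V x) \<partial>M)" "0 \<le> (\<integral>x. exp (-t * V x) \<partial>M)" by simp_all
    have "ennreal (\<integral>x. exp (-(t/4) * V x) \<partial>M) \<le> ennreal (2 * s0)"
      using key[OF t] e1 s0 by (simp add: ennreal_mult)
    hence a: "(\<integral>x. exp (-(t/4) * V x) \<partial>M) \<le> 2 * s0" using s0 by (simp add: ennreal_le_iff)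
    have "ennreal (exp (-Lam) * s0) \<le> ennreal (\<integral>x. exp (-t * V x) \<partial>M)"
      using low[OF t] e2 s0 by (simp add: ennreal_mult)
    hence b: "exp (-Lam) * s0 \<le> (\<integral>x. exp (-t * V x) \<partial>M)" using z1 by (simp add: ennreal_le_iff)
    have "s0 = exp Lam * (exp (-Lam) * s0)" by (simp add: exp_minus)
    also have "\<dots> \<le> exp Lam * (\<integral>x. exp (-t * V x) \<partial>M)" using b by simp
    finally show "(\<integral>x. exp (-(t/4) * V x) \<partial>M) \<le> A * (\<integral>x. exp (-t * V x) \<partial>M)"
      using a unfolding A_def by simp
    have ne: "(\<integral>\<^sup>+x. ennreal (exp (-t * V x)) \<partial>M) \<noteq> 0"
    proof
      assume "(\<integral>\<^sup>+x. ennreal (exp (-t * V x)) \<partial>M) = 0"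
      hence "AE x in M. ennreal (exp (-t * V x)) = 0" by (subst (asm) nn_integral_0_iff_AE) auto
      hence "AE x in M. False" by simp
      hence "emeasure M (space M) = 0" using ae_filter_eq_bot_iff[of M] trivial_limit_def by blast
      moreover have "emeasure M (space M) > 0" using pos[of UNIV] space by simp
      ultimately show False by simp
    qed
    thus "(\<integral>x. exp (-t * V x) \<partial>M) > 0" using e2 z1 by (auto simp: less_le)
  qed
  show ?thesis
  proof (intro allI impI)
    fix \<epsilon> :: real assume eps: "\<epsilon> > 0"
    define d0 where "d0 = min (1/2) (\<epsilon>/(4*A))"
    have d0: "d0 > 0" unfolding d0_def using eps A by simp
    show "\<exists>\<delta>\<^sub>0>0. \<forall>\<delta>. 0 < \<delta> \<and> \<delta> < \<delta>\<^sub>0 \<longrightarrow>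
           (\<forall>t\<in>{0<..1}.
              \<bar>(\<integral>x. exp (- t * V x) \<partial>M) / (\<integral>x. exp (- t * (1 - \<delta>) * V x) \<partial>M) - 1\<bar> < \<epsilon>)"
    proof (intro exI[of _ d0] conjI d0 allI impI ballI)
      fix \<delta> t :: real assume dl: "0 < \<delta> \<and> \<delta> < d0" and tt: "t \<in> {0<..1}"
      have t: "0 < t" "t \<le> 1" using tt by auto
      have dl1: "\<delta> < 1/2" "4*A*\<delta> < \<epsilon>" using dl A unfolding d0_def by (auto simp: field_simps)
      define Z where "Z = (\<integral>x. exp (- t * V x) \<partial>M)"
      define Zs where "Zs = (\<integral>x. exp (- t * (1 - \<delta>) * V x) \<partial>M)"
      define Z4 where "Z4 = (\<integral>x. exp (-(t/4) * V x) \<partial>M)"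
      have iZ: "integrable M (\<lambda>x. exp (- t * V x))" using intg[OF t, of t] t by simp
      have iZs: "integrable M (\<lambda>x. exp (- t * (1 - \<delta>) * V x))"
        using intg[OF t, of "t*(1-\<delta>)"] t dl1 by (simp add: field_simps)
      have iZ4: "integrable M (\<lambda>x. exp (-(t/4) * V x))" using intg[OF t, of "t/4"] by simp
      have Zp: "Z > 0" unfolding Z_def using Zpos[OF t] by simp
      have ZA: "Z4 \<le> A * Z" unfolding Z4_def Z_def using Zrel[OF t] by simp
      have ge: "Z \<le> Zs" unfolding Z_def Zs_def
      proof (rule integral_mono_AE[OF iZ iZs])
        show "AE x in M. exp (- t * V x) \<le> exp (- t * (1 - \<delta>) * V x)"
          using AEV
        proof eventually_elim
          fix x assume "1 \<le> V x"
          hence "t * (1 - \<delta>) * V x \<le> t * V x" using t dl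
            by (simp add: algebra_simps mult_nonneg_nonneg)
          thus "exp (- t * V x) \<le> exp (- t * (1 - \<delta>) * V x)" by simp
        qed
      qed
      have "Zs - Z = (\<integral>x. exp (- t * (1 - \<delta>) * V x) - exp (- t * V x) \<partial>M)"
        unfolding Z_def Zs_def by (rule Bochner_Integration.integral_diff[OF iZs iZ, symmetric])
      also have "\<dots> \<le> (\<integral>x. 4*\<delta>*exp (-(t/4) * V x) \<partial>M)"
      proof (rule integral_mono_AE)
        show "integrable M (\<lambda>x. exp (- t * (1 - \<delta>) * V x) - exp (- t * V x))"
          using iZs iZ by simp
        show "integrable M (\<lambda>x. 4*\<delta>*exp (-(t/4) * V x))" using iZ4 by simp
        show "AE x in M. exp (- t * (1 - \<delta>) * V x) - exp (- t * V x) \<le> 4*\<delta>*exp (-(t/4) * V x)"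
          using AEV
        proof eventually_elim
          fix x assume "1 \<le> V x"
          hence y: "0 \<le> t * V x" using t by simp
          have "exp (-(1-\<delta>)*(t*V x)) - exp (-(t*V x)) \<le> 4*\<delta>*exp (-(t*V x)/4)"
            by (rule exp_diff_bound[OF y]) (use dl dl1 in auto)
          moreover have "-(1-\<delta>)*(t*V x) = - t * (1 - \<delta>) * V x" by (simp add: algebra_simps)
          moreover have "-(t*V x)/4 = -(t/4) * V x" by simp
          ultimately show "exp (- t * (1 - \<delta>) * V x) - exp (- t * V x) \<le> 4*\<delta>*exp (-(t/4) * V x)"
            by simp
        qed
      qed
      also have "\<dots> = 4*\<delta>*Z4" unfolding Z4_def by simp
      also have "\<dots> \<le> 4*\<delta>*(A*Z)" using ZA dl by simp
      finally have diff: "Zs - Z \<le> 4*\<delta>*A*Z" by simp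
      have Zsp: "Zs > 0" using Zp ge by simp
      have "\<bar>Z / Zs - 1\<bar> = (Zs - Z) / Zs" using Zsp ge by (simp add: field_simps abs_if)
      also have "\<dots> \<le> 4*\<delta>*A*Z / Zs" using diff Zsp by (simp add: divide_right_mono)
      also have "\<dots> \<le> 4*\<delta>*A" using ge Zsp Zp dl A by (simp add: field_simps)
      also have "\<dots> < \<epsilon>" using dl1 by (simp add: algebra_simps)
      finally show "\<bar>(\<integral>x. exp (- t * V x) \<partial>M) / (\<integral>x. exp (- t * (1 - \<delta>) * V x) \<partial>M) - 1\<bar> < \<epsilon>"
        unfolding Z_def Zs_def .
    qed
  qed
qed

end
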